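(* Let $\mathcal H$, $V_0$ (bounded self-adjoint positive definite with bounded inverse), $C:\mathcal H\to\mathbb R^k$ and $X:\mathcal H\to\mathbb R^n$ be such that $K=XV_0^{-1}X^\top$ is invertible, and suppose $XV_0^{-1/2}=ZCV_0^{-1/2}+J$ where $Z\in\mathbb R^{n\times k}$ has rank $k$ (its rows span $\mathbb R^k$) and $J:\mathcal H\to\mathbb R^n$ satisfies $CV_0^{-1/2}J^\top=0$. Let $L_\dagger=CV_0^{-1}X^\top K^{-1}$ and $Z^\dagger$ the Moore–Penrose pseudo-inverse of $Z$. Then $$\|(C-L_\dagger X)V_0^{-1/2}\|_F\le\|J\|_F\,\|Z^\dagger\|_F,$$ i.e. $L_\dagger$ has relative $\nu$-bias $\|(C-L_\dagger X)V_0^{-1/2}\|_F^2\le\nu^2\|L_\dagger\|_F^2$ with $\nu=\|J\|_F\|Z^\dagger\|_F/\|L_\dagger\|_F$.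
   Context: $\|\cdot\|_F$ is the Frobenius (Hilbert–Schmidt) norm; $\cdot^\top$ the adjoint. *)

theory Defs
  imports "HOL-Analysis.Analysis"
begin

definition hadj :: "('a::real_inner \<Rightarrow> 'b::real_inner) \<Rightarrow> 'b \<Rightarrow> 'a" where
  "hadj A = (\<lambda>y. THE z. \<forall>x. inner (A x) y = inner x z)"

definition selfadjoint_op :: "('a::real_inner \<Rightarrow> 'a) \<Rightarrow> bool" where
  "selfadjoint_op A \<longleftrightarrow> (\<forall>x y. inner (A x) y = inner x (A y))"

definition positive_op :: "('a::real_inner \<Rightarrow> 'a) \<Rightarrow> bool" where
  "positive_op A \<longleftrightarrow> (\<forall>x. 0 \<le> inner (A x) x)"

definition posdef_op :: "('a::real_inner \<Rightarrow> 'a) \<Rightarrow> bool" where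
  "posdef_op A \<longleftrightarrow> (\<forall>x. x \<noteq> 0 \<longrightarrow> 0 < inner (A x) x)"

definition is_pos_sqrt :: "('a::real_inner \<Rightarrow> 'a) \<Rightarrow> ('a \<Rightarrow> 'a) \<Rightarrow> bool" where
  "is_pos_sqrt W A \<longleftrightarrow> bounded_linear W \<and> selfadjoint_op W \<and> positive_op W \<and> (\<forall>x. W (W x) = A x)"

definition frob_op :: "('a::real_inner \<Rightarrow> real^'m) \<Rightarrow> real" where
  "frob_op A = sqrt (\<Sum>i\<in>UNIV. (norm (hadj A (axis i 1)))\<^sup>2)"

definition frob_mat :: "real^'c^'r \<Rightarrow> real" where
  "frob_mat M = sqrt (\<Sum>i\<in>UNIV. \<Sum>j\<in>UNIV. (M $ i $ j)\<^sup>2)"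

definition pinv :: "real^'c^'r \<Rightarrow> real^'r^'c" where
  "pinv M = (THE P. M ** P ** M = M \<and> P ** M ** P = P \<and>
                    transpose (M ** P) = M ** P \<and> transpose (P ** M) = P ** M)"

end

theory Submission
  imports Defs
begin




lemma negq: "0 \<le> (a::real) \<Longrightarrow> c \<noteq> 0 \<Longrightarrow> (- c / (2*a+1)) * c + (- c / (2*a+1))^2 * a < 0"
proof -
  assume a: "0 \<le> a" and c: "c \<noteq> 0"
  define q where "q = 2*a+1"
  define t where "t = - c / q"
  have q: "q > 0" using a by (simp add: q_def)
  have tq: "t * q = - c" using q by (simp add: t_def)
  have "q^2 * (t*c + t^2*a) = (t*q)*q*c + (t*q)^2*a" by (simp add: algebra_simps power2_eq_square)
  also have "\<dots> = (-c)*q*c + c^2*a" by (simp add: tq power2_eq_square)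
  also have "\<dots> = -(c^2*(a+1))" by (simp add: q_def algebra_simps power2_eq_square)
  also have "\<dots> < 0" using a c by (simp add: add_nonneg_pos)
  finally have "q^2 * (t*c + t^2*a) < 0" .
  then have "t*c + t^2*a < 0" using q by (simp add: mult_less_0_iff)
  then show ?thesis by (simp add: t_def q_def)
qed

lemma aux8: "(A::real) < 4*(u+v) \<Longrightarrow> u \<le> w \<Longrightarrow> v \<le> w \<Longrightarrow> 8*w < (E::real) \<Longrightarrow> A < E"
  by (smt (verit))

lemma riesz:
  fixes f :: "'a::{real_inner,complete_space} \<Rightarrow> real"
  assumes bl: "bounded_linear f"
  shows "\<exists>z. \<forall>x. f x = inner x z"
proof -
  interpret f: bounded_linear f by fact
  obtain B where B: "B > 0" "\<And>x. norm (f x) \<le> norm x * B"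
    using f.pos_bounded by blast
  define \<phi> where "\<phi> x = (norm x)^2/2 - f x" for x
  have lb: "- (B^2/2) \<le> \<phi> x" for x
  proof -
    have "f x \<le> norm x * B" using B(2)[of x] by simp
    moreover have "0 \<le> (norm x - B)^2" by simp
    ultimately show ?thesis unfolding \<phi>_def by (simp add: power2_eq_square algebra_simps)
  qed
  define d where "d = Inf (range \<phi>)"
  have bdd: "bdd_below (range \<phi>)" by (meson bdd_belowI2 lb)
  have dle: "d \<le> \<phi> x" for x unfolding d_def using bdd by (simp add: cInf_lower)
  have "\<exists>x. \<phi> x < d + 1/(Suc n)" for n
  proof -
    have "Inf (range \<phi>) < d + 1/Suc n" unfolding d_def by simp
    then show ?thesis using cInf_lessD[of "range \<phi>"] by blast
  qed
  then obtain s where s: "\<And>n. \<phi> (s n) < d + 1/Suc n" by metis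
  have ident: "\<phi> x + \<phi> y - 2 * \<phi> ((1/2) *\<^sub>R (x + y)) = (norm (x - y))^2/4" for x y
    unfolding \<phi>_def power2_norm_eq_inner
    by (simp add: f.add f.scale inner_add inner_diff inner_commute algebra_simps)
  have key0: "\<lbrakk>a + b - 2 * c = A / 4; a < d + u; b < d + v; d \<le> c\<rbrakk> \<Longrightarrow> A < 4 * (u + v)" for a b c A u v d :: real
    by (simp add: field_simps)
  have key: "(norm (s p - s q))^2 < 4 * (1/Suc p + 1/Suc q)" for p q
  proof -
    define A where "A = (norm (s p - s q))^2"
    define u where "u = 1/real (Suc p)"
    define v where "v = 1/real (Suc q)"
    have "\<phi> (s p) + \<phi> (s q) - 2 * \<phi> ((1/2) *\<^sub>R (s p + s q)) = A/4"
      using ident A_def by simp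
    moreover have "\<phi> (s p) < d + u" "\<phi> (s q) < d + v" using s u_def v_def by auto
    moreover have "d \<le> \<phi> ((1/2) *\<^sub>R (s p + s q))" by (rule dle)
    ultimately have "A < 4 * (u + v)"
      by (rule key0)
    then show ?thesis by (simp add: A_def u_def v_def)
  qed
  have "Cauchy s"
  proof (rule metric_CauchyI)
    fix e :: real assume e: "e > 0"
    obtain N where N: "8 / e^2 < real N" using reals_Archimedean2 by blast
    show "\<exists>M. \<forall>m\<ge>M. \<forall>n\<ge>M. dist (s m) (s n) < e"
    proof (intro exI allI impI)
      fix m n assume m: "m \<ge> N" and n: "n \<ge> N"
      have e2: "e^2 > 0" using e by simp
      have "1/Suc m \<le> 1/Suc N" "1/Suc n \<le> 1/Suc N" using m n by (simp_all add: frac_le)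
      moreover have "8 * (1/ Suc N) < e^2"
      proof -
        have "8 / e^2 < real (Suc N)" using N by simp
        then have "8 < real (Suc N) * e^2" using e2 by (simp add: divide_less_eq)
        then show ?thesis by (simp add: divide_less_eq mult.commute)
      qed
      ultimately have "(norm (s m - s n))^2 < e^2" using key[of m n] aux8 by blast
      then show "dist (s m) (s n) < e" unfolding dist_norm
        using e power_less_imp_less_base[of "norm (s m - s n)" 2 e] by simp
    qed
  qed
  then obtain z where z: "s \<longlonglongrightarrow> z" using Cauchy_convergent_iff convergent_def by blast
  have "(\<lambda>n. \<phi> (s n)) \<longlonglongrightarrow> \<phi> z" unfolding \<phi>_def
    by (intro tendsto_intros z f.tendsto) simp
  moreover have "(\<lambda>n. \<phi> (s n)) \<longlonglongrightarrow> d"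
  proof (rule real_tendsto_sandwich[of "\<lambda>n. d" _ _ "\<lambda>n. d + 1/Suc n"])
    show "\<forall>\<^sub>F n in sequentially. d \<le> \<phi> (s n)" using dle by simp
    show "\<forall>\<^sub>F n in sequentially. \<phi> (s n) \<le> d + 1/Suc n" using s by (simp add: less_imp_le)
    show "(\<lambda>n. d) \<longlonglongrightarrow> d" by simp
    show "(\<lambda>n. d + 1/Suc n) \<longlonglongrightarrow> d"
      using tendsto_add[OF tendsto_const LIMSEQ_Suc[OF lim_inverse_n']] by (simp add: inverse_eq_divide)
  qed
  ultimately have phz: "\<phi> z = d" using LIMSEQ_unique by blast
  have "f y = inner y z" for y
  proof (rule ccontr)
    assume ne: "f y \<noteq> inner y z"
    define c where "c = inner z y - f y"
    define a where "a = (norm y)^2/2"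
    have c: "c \<noteq> 0" using ne by (simp add: c_def inner_commute)
    have a: "a \<ge> 0" by (simp add: a_def)
    define t where "t = - c / (2*a+1)"
    have "\<phi> (z + t *\<^sub>R y) - \<phi> z = t * c + t^2 * a"
      unfolding \<phi>_def c_def a_def power2_norm_eq_inner
      by (simp add: f.add f.scale inner_add inner_commute algebra_simps power2_eq_square)
    also have "\<dots> < 0" unfolding t_def using negq[OF a c] .
    finally show False using dle[of "z + t *\<^sub>R y"] phz by simp
  qed
  then show ?thesis by blast
qed


lemma inner_unique:
  fixes a b :: "'a::real_inner"
  assumes "\<And>x. inner x a = inner x b"
  shows "a = b"
proof -
  have "inner (a - b) (a - b) = 0" using assms[of "a - b"] by (simp add: inner_diff_right)
  then show ?thesis by simp
qed

lemma hadj_eqI: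
  assumes "\<And>x y. inner (A x) y = inner x (B y)"
  shows "hadj A = B"
proof
  fix y
  show "hadj A y = B y" unfolding hadj_def
  proof (rule the_equality)
    show "\<forall>x. inner (A x) y = inner x (B y)" using assms by simp
    fix z assume "\<forall>x. inner (A x) y = inner x z"
    then show "z = B y" using assms by (metis inner_unique)
  qed
qed

lemma hadj_exists:
  fixes A :: "'a::{real_inner,complete_space} \<Rightarrow> real^'n"
  assumes bl: "bounded_linear A"
  shows "inner (A x) y = inner x (hadj A y)"
proof -
  have "\<forall>i. \<exists>z. \<forall>x. A x $ i = inner x z"
  proof
    fix i
    have "bounded_linear (\<lambda>x. A x $ i)"
      using bounded_linear_compose[OF bounded_linear_vec_nth bl] .
    then show "\<exists>z. \<forall>x. A x $ i = inner x z" by (rule riesz)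
  qed
  then obtain z where z0: "\<forall>i. \<forall>x. A x $ i = inner x (z i)" using choice[of "\<lambda>i z. \<forall>x. A x $ i = inner x z"] by blast
  have z: "\<And>i x. A x $ i = inner x (z i)" using z0 by blast
  define B where "B y = (\<Sum>i\<in>UNIV. (y $ i) *\<^sub>R z i)" for y :: "real^'n"
  have "\<And>x y. inner (A x) y = inner x (B y)"
    unfolding B_def inner_vec_def by (simp add: inner_sum_right z mult.commute)
  moreover then have "hadj A = B" by (rule hadj_eqI)
  ultimately show ?thesis by simp
qed

lemma adj_linear:
  fixes A :: "'a::real_inner \<Rightarrow> 'b::real_inner"
  assumes adj: "\<And>x y. inner (A x) y = inner x (B y)"
    and lA: "linear A"
  shows "linear B"
proof (rule linearI)
  fix y y'
  show "B (y + y') = B y + B y'"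
    by (rule inner_unique) (simp add: adj[symmetric] inner_add_right)
next
  fix c y
  show "B (c *\<^sub>R y) = c *\<^sub>R B y"
    by (rule inner_unique) (simp add: adj[symmetric])
qed

lemma inner_mat_vec:
  fixes M :: "real^'a^'b"
  shows "inner (M *v x) y = inner x (y v* M)"
  using dot_lmul_matrix[of y M x] by (simp add: inner_commute)

lemma pinv_left:
  fixes Z :: "real^'k^'n"
  assumes rk: "rank Z = CARD('k)"
  shows "pinv Z ** Z = mat 1"
proof -
  have injZ: "inj ((*v) Z)" using rk full_rank_injective by blast
  then obtain L where L: "L ** Z = mat 1" using matrix_left_invertible_injective by blast
  define G where "G = transpose Z ** Z"
  have "inj ((*v) G)"
  proof (rule injI)
    fix x y assume "G *v x = G *v y"
    then have "G *v (x - y) = 0" by (simp add: matrix_vector_mult_diff_distrib)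
    then have "inner (x - y) (G *v (x - y)) = 0" by simp
    then have "inner (Z *v (x - y)) (Z *v (x - y)) = 0"
      unfolding G_def by (simp add: inner_mat_vec matrix_vector_mul_assoc[symmetric] inner_commute)
    then have "Z *v (x - y) = 0" by simp
    then have "Z *v (x - y) = Z *v 0" by simp
    then have "x - y = 0" using injZ by (meson injD)
    then show "x = y" by simp
  qed
  then obtain Gl where "Gl ** G = mat 1" using matrix_left_invertible_injective by blast
  then have invG: "invertible G" using invertible_left_inverse by blast
  define Gi where "Gi = matrix_inv G"
  have GGi: "G ** Gi = mat 1" and GiG: "Gi ** G = mat 1"
    using invG unfolding Gi_def matrix_inv_def invertible_def by (metis (mono_tags, lifting) someI_ex)+
  have Gsym: "transpose G = G" unfolding G_def by (simp add: matrix_transpose_mul)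
  have "transpose Gi ** G = mat 1"
    by (metis GGi Gsym matrix_transpose_mul transpose_mat)
  then have Gisym: "transpose Gi = Gi"
    by (metis GGi matrix_mul_assoc matrix_mul_lid matrix_mul_rid)
  define P0 where "P0 = Gi ** transpose Z"
  have P0Z: "P0 ** Z = mat 1" unfolding P0_def using GiG by (simp add: G_def matrix_mul_assoc)
  have "pinv Z = P0" unfolding pinv_def
  proof (rule the_equality)
    show "Z ** P0 ** Z = Z \<and> P0 ** Z ** P0 = P0 \<and>
      transpose (Z ** P0) = Z ** P0 \<and> transpose (P0 ** Z) = P0 ** Z"
    proof (intro conjI)
      show "Z ** P0 ** Z = Z" by (simp add: P0Z matrix_mul_assoc[symmetric])
      show "P0 ** Z ** P0 = P0" by (simp add: P0Z)
      show "transpose (Z ** P0) = Z ** P0"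
        unfolding P0_def by (simp add: matrix_transpose_mul Gisym matrix_mul_assoc)
      show "transpose (P0 ** Z) = P0 ** Z" by (simp add: P0Z)
    qed
  next
    fix P assume P: "Z ** P ** Z = Z \<and> P ** Z ** P = P \<and>
      transpose (Z ** P) = Z ** P \<and> transpose (P ** Z) = P ** Z"
    have PZ: "P ** Z = mat 1"
    proof -
      have "L ** (Z ** P ** Z) = L ** Z" using P by simp
      then show ?thesis using L by (metis matrix_mul_assoc matrix_mul_lid)
    qed
    have "P = P ** (Z ** P)" using P by (metis matrix_mul_assoc)
    also have "\<dots> = P ** transpose (Z ** P)" using P by simp
    also have "\<dots> = (P ** transpose P) ** transpose Z"
      by (simp add: matrix_transpose_mul matrix_mul_assoc)
    finally have P1: "P = (P ** transpose P) ** transpose Z" .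
    have "(P ** transpose P) ** G = mat 1"
      using PZ P1 unfolding G_def by (metis matrix_mul_assoc)
    then have "P ** transpose P = Gi"
      by (metis GGi matrix_mul_assoc matrix_mul_lid matrix_mul_rid)
    then show "P = P0" using P1 by (simp add: P0_def)
  qed
  then show ?thesis using P0Z by simp
qed



theorem lemmaA4:
  fixes V0 W :: "'h::{real_inner, complete_space} \<Rightarrow> 'h"
    and C :: "'h \<Rightarrow> real^'k"
    and X J :: "'h \<Rightarrow> real^'n"
    and Z :: "real^'k^'n"
  assumes V0_bl: "bounded_linear V0"
    and V0_sa: "selfadjoint_op V0"
    and V0_pd: "posdef_op V0"
    and V0_bij: "bij V0"
    and V0inv_bl: "bounded_linear (inv V0)"
    and W_sqrt: "is_pos_sqrt W (inv V0)"
    and C_bl: "bounded_linear C"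
    and X_bl: "bounded_linear X"
    and J_bl: "bounded_linear J"
    and K_inv: "invertible (matrix (\<lambda>y. X (inv V0 (hadj X y))))"
    and decomp: "\<forall>h. X (W h) = Z *v C (W h) + J h"
    and Z_rank: "rank Z = CARD('k)"
    and orth: "\<forall>y. C (W (hadj J y)) = 0"
  shows "frob_op (\<lambda>h. C (W h)
            - C (inv V0 (hadj X (matrix_inv (matrix (\<lambda>y. X (inv V0 (hadj X y)))) *v X (W h)))))
         \<le> frob_op J * frob_mat (pinv Z)"
proof -
  define T where "T = (\<lambda>h. C (W h)
            - C (inv V0 (hadj X (matrix_inv (matrix (\<lambda>y. X (inv V0 (hadj X y)))) *v X (W h)))))"
  have Wbl: "bounded_linear W" using W_sqrt unfolding is_pos_sqrt_def by blast
  interpret Wb: bounded_linear W by (rule Wbl)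
  interpret Xb: bounded_linear X by (rule X_bl)
  interpret Jb: bounded_linear J by (rule J_bl)
  interpret Cb: bounded_linear C by (rule C_bl)
  have Wsa: "\<And>x y. inner (W x) y = inner x (W y)"
    using W_sqrt unfolding is_pos_sqrt_def selfadjoint_op_def by blast
  have WW: "\<And>x. inv V0 x = W (W x)" using W_sqrt unfolding is_pos_sqrt_def by simp
  define Xs where "Xs = hadj X"
  define Js where "Js = hadj J"
  have adjX: "\<And>x y. inner (X x) y = inner x (Xs y)" unfolding Xs_def by (rule hadj_exists[OF X_bl])
  have adjJ: "\<And>x y. inner (J x) y = inner x (Js y)" unfolding Js_def by (rule hadj_exists[OF J_bl])
  have blXs: "bounded_linear Xs"
    using adj_linear[OF adjX Xb.linear] linear_conv_bounded_linear by blast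
  have blJs: "bounded_linear Js"
    using adj_linear[OF adjJ Jb.linear] linear_conv_bounded_linear by blast
  interpret Xsb: bounded_linear Xs by (rule blXs)
  interpret Jsb: bounded_linear Js by (rule blJs)
  define Kf where "Kf = (\<lambda>y. X (inv V0 (hadj X y)))"
  have Kf2: "Kf = (\<lambda>y. X (W (W (Xs y))))" by (rule ext) (simp add: Kf_def WW Xs_def)
  have blK: "bounded_linear Kf" unfolding Kf2
    by (rule bounded_linear_compose[OF X_bl bounded_linear_compose[OF Wbl bounded_linear_compose[OF Wbl blXs]]])
  define Ki where "Ki = matrix_inv (matrix Kf)"
  have MKi: "matrix Kf ** Ki = mat 1"
    using K_inv unfolding Ki_def Kf_def[symmetric] matrix_inv_def invertible_def
    by (metis (mono_tags, lifting) someI_ex)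
  have KKi: "Kf (Ki *v y) = y" for y
  proof -
    have "Kf (Ki *v y) = matrix Kf *v (Ki *v y)"
      using matrix_vector_mul(3)[OF blK] by metis
    also have "\<dots> = y" by (simp add: matrix_vector_mul_assoc MKi)
    finally show ?thesis .
  qed
  have Ksym: "inner (Kf y) y' = inner y (Kf y')" for y y'
  proof -
    have "inner (Kf y) y' = inner (W (Xs y)) (W (Xs y'))"
      unfolding Kf2 by (simp add: adjX Wsa)
    moreover have "inner y (Kf y') = inner (W (Xs y')) (W (Xs y))"
      unfolding Kf2 by (simp add: adjX Wsa inner_commute[of y])
    ultimately show ?thesis by (simp add: inner_commute)
  qed
  have Kisym: "inner (Ki *v y) y' = inner y (Ki *v y')" for y y'
  proof -
    have "inner (Ki *v y) y' = inner (Ki *v y) (Kf (Ki *v y'))" by (simp add: KKi)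
    also have "\<dots> = inner (Kf (Ki *v y)) (Ki *v y')" by (simp add: Ksym)
    also have "\<dots> = inner y (Ki *v y')" by (simp add: KKi)
    finally show ?thesis .
  qed
  define A where "A h = X (W h)" for h
  define As where "As y = W (Xs y)" for y
  have adjA: "inner (A h) y = inner h (As y)" for h y
    unfolding A_def As_def by (simp add: adjX Wsa)
  have AAs: "A (As y) = Kf y" for y unfolding A_def As_def Kf2 by simp
  define Q where "Q h = As (Ki *v A h)" for h
  define Zp where "Zp = pinv Z"
  have ZpZ: "Zp ** Z = mat 1" unfolding Zp_def by (rule pinv_left[OF Z_rank])
  have Bdec: "C (W g) = Zp *v A g - Zp *v J g" for g
  proof -
    have "Zp *v A g = Zp *v (Z *v C (W g)) + Zp *v J g"
      using decomp unfolding A_def by (simp add: matrix_vector_right_distrib)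
    also have "\<dots> = C (W g) + Zp *v J g" by (simp add: matrix_vector_mul_assoc ZpZ)
    finally show ?thesis by simp
  qed
  have AQ: "A (h - Q h) = 0" for h
  proof -
    have "A (Q h) = A h" unfolding Q_def by (simp add: AAs KKi)
    then show ?thesis unfolding A_def by (simp add: Wb.diff Xb.diff)
  qed
  have Teq: "T = (\<lambda>h. - (Zp *v J (h - Q h)))"
  proof (rule ext)
    fix h
    have "T h = C (W h) - C (W (Q h))"
      unfolding T_def Q_def As_def A_def Kf_def[symmetric] Ki_def[symmetric] by (simp add: WW Xs_def)
    also have "\<dots> = C (W (h - Q h))" by (simp add: Wb.diff Cb.diff)
    also have "\<dots> = - (Zp *v J (h - Q h))" using Bdec[of "h - Q h"] AQ[of h] by simp
    finally show "T h = - (Zp *v J (h - Q h))" .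
  qed
  define u where "u e = Js (e v* Zp)" for e
  define Ts where "Ts e = - (u e - Q (u e))" for e
  have Qsym: "inner (Q h) v = inner h (Q v)" for h v
  proof -
    have "inner (Q h) v = inner (Ki *v A h) (A v)" unfolding Q_def by (simp add: adjA inner_commute)
    also have "\<dots> = inner (A h) (Ki *v A v)" by (rule Kisym)
    also have "\<dots> = inner h (Q v)" unfolding Q_def by (simp add: adjA)
    finally show ?thesis .
  qed
  have adjT: "inner (T h) e = inner h (Ts e)" for h e
  proof -
    have "inner (T h) e = - inner (J (h - Q h)) (e v* Zp)"
      unfolding Teq by (simp add: inner_mat_vec)
    also have "\<dots> = - inner (h - Q h) (u e)" unfolding u_def by (simp add: adjJ)
    also have "\<dots> = - (inner h (u e) - inner h (Q (u e)))" by (simp add: inner_diff_left Qsym)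
    also have "\<dots> = inner h (Ts e)" unfolding Ts_def by (simp add: inner_diff_right)
    finally show ?thesis .
  qed
  have hT: "hadj T = Ts" by (rule hadj_eqI) (rule adjT)
  have normTs: "(norm (Ts e))^2 \<le> (norm (u e))^2" for e
  proof -
    define v where "v = u e"
    define w where "w = Ki *v A v"
    have Qv: "Q v = As w" unfolding Q_def w_def ..
    have i1: "inner v (Q v) = inner (A v) w" unfolding Qv by (simp add: adjA)
    have i2: "inner (Q v) (Q v) = inner (A v) w"
    proof -
      have "inner (Q v) (Q v) = inner (A (As w)) w" unfolding Qv by (simp add: adjA)
      also have "\<dots> = inner (A v) w" by (simp add: AAs w_def KKi)
      finally show ?thesis .
    qed
    have "(norm (Ts e))^2 = inner (v - Q v) (v - Q v)"
      unfolding Ts_def v_def by (simp only: norm_minus_cancel power2_norm_eq_inner)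
    also have "\<dots> = inner v v - 2 * inner v (Q v) + inner (Q v) (Q v)"
      by (simp add: inner_diff_left inner_diff_right inner_commute)
    also have "\<dots> = inner v v - inner (Q v) (Q v)" using i1 i2 by simp
    also have "\<dots> \<le> inner v v" by simp
    finally show ?thesis by (simp add: v_def power2_norm_eq_inner)
  qed
  define SJ where "SJ = (\<Sum>j\<in>UNIV. (norm (Js (axis j 1)))^2)"
  have rowb: "(norm (u (axis i 1)))^2 \<le> (\<Sum>j\<in>UNIV. (Zp $ i $ j)^2) * SJ" for i
  proof -
    have row: "axis i 1 v* Zp = (\<chi> j. Zp $ i $ j)"
      by (simp add: vec_eq_iff vector_matrix_mult_def axis_def if_distrib[of "\<lambda>x. x * _"] cong: if_cong)
    have exp: "Js v = (\<Sum>j\<in>UNIV. (v $ j) *\<^sub>R Js (axis j 1))" for v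
    proof -
      have "Js v = Js (\<Sum>j\<in>UNIV. (v $ j) *s axis j 1)" by (simp add: basis_expansion)
      also have "\<dots> = (\<Sum>j\<in>UNIV. (v $ j) *\<^sub>R Js (axis j 1))"
        by (simp add: Jsb.sum Jsb.scale scalar_mult_eq_scaleR)
      finally show ?thesis .
    qed
    have "norm (u (axis i 1)) = norm (\<Sum>j\<in>UNIV. Zp $ i $ j *\<^sub>R Js (axis j 1))"
      unfolding u_def row by (subst exp) simp
    also have "\<dots> \<le> (\<Sum>j\<in>UNIV. \<bar>Zp $ i $ j\<bar> * \<bar>norm (Js (axis j 1))\<bar>)"
      by (rule order_trans[OF norm_sum]) simp
    also have "\<dots> \<le> L2_set (\<lambda>j. Zp $ i $ j) UNIV * L2_set (\<lambda>j. norm (Js (axis j 1))) UNIV"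
      by (rule L2_set_mult_ineq)
    finally have "norm (u (axis i 1)) \<le> L2_set (\<lambda>j. Zp $ i $ j) UNIV * L2_set (\<lambda>j. norm (Js (axis j 1))) UNIV" .
    then have "(norm (u (axis i 1)))^2 \<le> (L2_set (\<lambda>j. Zp $ i $ j) UNIV * L2_set (\<lambda>j. norm (Js (axis j 1))) UNIV)^2"
      by (rule power_mono) simp
    also have "\<dots> = (\<Sum>j\<in>UNIV. (Zp $ i $ j)^2) * SJ"
      unfolding SJ_def power_mult_distrib L2_set_def
      by (simp add: sum_nonneg)
    finally show ?thesis .
  qed
  have "frob_op T = sqrt (\<Sum>i\<in>UNIV. (norm (Ts (axis i 1)))^2)"
    unfolding frob_op_def hT ..
  also have "\<dots> \<le> sqrt (\<Sum>i\<in>UNIV. (\<Sum>j\<in>UNIV. (Zp $ i $ j)^2) * SJ)"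
    by (intro real_sqrt_le_mono sum_mono order_trans[OF normTs rowb])
  also have "\<dots> = sqrt (\<Sum>i\<in>UNIV. \<Sum>j\<in>UNIV. (Zp $ i $ j)^2) * sqrt SJ"
    by (simp only: sum_distrib_right[symmetric] real_sqrt_mult)
  also have "\<dots> = frob_op J * frob_mat Zp"
    unfolding frob_op_def frob_mat_def SJ_def Js_def by simp
  finally show ?thesis unfolding T_def Zp_def .
qed

end
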